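(* Let $k, r, a, b, m, n$ be integers satisfying $$k\geq 1,\quad 0\leq a\leq m,\quad \max\{0,\tfrac{a}{k}-r\}< b\leq n,\quad n> \tfrac{m}{k}-r.$$ Let $\mathcal{L}_{\frac1k,r}(a,b;m,n)$ be the set of lattice paths from $(a,b)$ to $(m,n)$ with unit steps $(1,0)$ and $(0,1)$ that stay strictly above the line $y=\frac{x}{k}-r$. Then $$|\mathcal{L}_{\frac1k,r}(a,b;m,n)|=\sum_{i=0}^{\lfloor\frac{k(n+r)-m-1}{k+1}\rfloor}(-1)^i\,\frac{k(b+r)-a}{(k+1)(n-i)-a-b+kr}\binom{(k+1)(n-i)-a-b+kr}{n-b-i}\binom{k(n+r-i)-m-1}{i}.$$
   Context: A path stays strictly above the line $y=\frac{x}{k}-r$ if every lattice point $(x,y)$ on it satisfies $y> \frac{x}{k}-r$. $\lfloor x\rfloor$ is the floor function. Binomial coefficients $\binom{N}{j}$ with $N\ge0$ equal $0$ when $j<0$ or $j>N$. *)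

theory Defs
  imports Complex_Main
begin

text \<open>A lattice path with unit steps is encoded by its list of steps:
  True = east step (1,0), False = north step (0,1).
  path_points p ss lists all lattice points visited, starting at p.\<close>

fun path_points :: "int \<times> int \<Rightarrow> bool list \<Rightarrow> (int \<times> int) list" where
  "path_points p [] = [p]"
| "path_points (x, y) (s # ss) =
     (x, y) # path_points (if s then (x + 1, y) else (x, y + 1)) ss"

definition above_paths :: "int \<Rightarrow> int \<Rightarrow> int \<Rightarrow> int \<Rightarrow> int \<Rightarrow> int \<Rightarrow> bool list set" where
  "above_paths k r a b m n =
     {ss. last (path_points (a, b) ss) = (m, n) \<and>
          (\<forall>(x, y) \<in> set (path_points (a, b) ss).
              real_of_int y > real_of_int x / real_of_int k - real_of_int r)}"

definition ibinom :: "int \<Rightarrow> int \<Rightarrow> int" where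
  "ibinom N j = (if N < 0 \<or> j < 0 then 0 else int (nat N choose nat j))"

end

theory Submission
  imports Defs
begin

lemma pp_ne: "path_points p ss \<noteq> []"
  by (cases ss; cases p) auto

lemma pp_last: "fst (last (path_points (x,y) ss)) = x + int (length (filter id ss)) \<and>
   snd (last (path_points (x,y) ss)) = y + int (length (filter Not ss))"
proof (induction ss arbitrary: x y)
  case Nil then show ?case by simp
next
  case (Cons s ss)
  have "last (path_points (x,y) (s#ss)) = last (path_points (if s then (x + 1, y) else (x, y + 1)) ss)"
    using pp_ne by simp
  then show ?case using Cons[of "x+1" y] Cons[of x "y+1"] by (cases s) auto
qed

definition AP :: "int \<Rightarrow> int \<Rightarrow> int \<Rightarrow> int \<Rightarrow> int \<Rightarrow> int \<Rightarrow> bool list set" where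
  "AP k r a b m n = {ss. last (path_points (a, b) ss) = (m, n) \<and>
          (\<forall>(x, y) \<in> set (path_points (a, b) ss). x < k * (y + r))}"

lemma good_iff:
  assumes "k \<ge> 1"
  shows "(real_of_int y > real_of_int x / real_of_int k - real_of_int r) \<longleftrightarrow> x < k * (y + r)"
proof -
  have kp: "real_of_int k > 0" using assms by simp
  have "(real_of_int y > real_of_int x / real_of_int k - real_of_int r) \<longleftrightarrow>
        real_of_int x < real_of_int k * (real_of_int y + real_of_int r)"
    using kp by (simp add: field_simps)
  also have "\<dots> \<longleftrightarrow> x < k * (y + r)"
    by (metis of_int_add of_int_less_iff of_int_mult)
  finally show ?thesis .
qed

lemma AP_eq: "k \<ge> 1 \<Longrightarrow> above_paths k r a b m n = AP k r a b m n"
  unfolding above_paths_def AP_def using good_iff[of k] by auto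

lemma AP_empty:
  assumes "m < a \<or> n < b \<or> \<not> a < k * (b + r)"
  shows "AP k r a b m n = {}"
proof -
  { fix ss assume ss: "ss \<in> AP k r a b m n"
    then have l: "last (path_points (a, b) ss) = (m, n)" and g: "\<forall>(x, y) \<in> set (path_points (a, b) ss). x < k * (y + r)"
      unfolding AP_def by auto
    have "(a,b) \<in> set (path_points (a, b) ss)" by (cases ss) auto
    with g have "a < k * (b + r)" by auto
    moreover have "m \<ge> a" "n \<ge> b" using pp_last[of a b ss] l by auto
    ultimately have False using assms by auto }
  then show ?thesis by blast
qed

lemma AP_finite: "finite (AP k r a b m n)"
proof -
  have "AP k r a b m n \<subseteq> {ss. set ss \<subseteq> UNIV \<and> length ss = nat (m - a + n - b)}"
  proof
    fix ss assume "ss \<in> AP k r a b m n"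
    then have l: "last (path_points (a, b) ss) = (m, n)" unfolding AP_def by auto
    have "length (filter id ss) + length (filter Not ss) = length ss"
      using sum_length_filter_compl[of id ss] by (simp add: comp_def)
    then show "ss \<in> {ss. set ss \<subseteq> UNIV \<and> length ss = nat (m - a + n - b)}"
      using pp_last[of a b ss] l by auto
  qed
  moreover have "finite {ss::bool list. set ss \<subseteq> UNIV \<and> length ss = nat (m - a + n - b)}"
    by (rule finite_lists_length_eq) simp
  ultimately show ?thesis by (rule finite_subset)
qed

lemma AP_base:
  assumes "a < k * (b + r)"
  shows "AP k r a b a b = {[]}"
proof -
  { fix ss assume ss: "ss \<in> AP k r a b a b"
    then have l: "last (path_points (a, b) ss) = (a, b)" unfolding AP_def by auto
    have "length (filter id ss) + length (filter Not ss) = length ss"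
      using sum_length_filter_compl[of id ss] by (simp add: comp_def)
    then have "ss = []" using pp_last[of a b ss] l by auto }
  moreover have "[] \<in> AP k r a b a b" using assms unfolding AP_def by auto
  ultimately show ?thesis by blast
qed

lemma AP_step:
  assumes "a < k * (b + r)" "(a, b) \<noteq> (m, n)"
  shows "AP k r a b m n = Cons True ` AP k r (a+1) b m n \<union> Cons False ` AP k r a (b+1) m n"
proof (intro set_eqI iffI)
  fix ss assume ss: "ss \<in> AP k r a b m n"
  show "ss \<in> Cons True ` AP k r (a+1) b m n \<union> Cons False ` AP k r a (b+1) m n"
  proof (cases ss)
    case Nil then show ?thesis using ss assms unfolding AP_def by auto
  next
    case (Cons s t)
    then show ?thesis using ss pp_ne unfolding AP_def by (cases s) auto
  qed
next
  fix ss assume "ss \<in> Cons True ` AP k r (a+1) b m n \<union> Cons False ` AP k r a (b+1) m n"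
  then show "ss \<in> AP k r a b m n" using pp_ne assms unfolding AP_def by auto
qed

lemma AP_card_step:
  assumes "a < k * (b + r)" "(a, b) \<noteq> (m, n)"
  shows "card (AP k r a b m n) = card (AP k r (a+1) b m n) + card (AP k r a (b+1) m n)"
  unfolding AP_step[OF assms]
  by (subst card_Un_disjoint) (auto simp: AP_finite card_image)


lemma alg: fixes l c k j X :: real assumes "l > 1"
  shows "(c-1)/(l-1) * ((l-j)*X/l) + (c+k)/(l-1)*(j*X/l) = X/(l*(l-1)) * ((c-1)*(l-j) + (c+k)*j)"
proof -
  have "(c-1)/(l-1) * ((l-j)*X/l) = X/(l*(l-1)) * ((c-1)*(l-j))" by (simp add: ac_simps)
  moreover have "(c+k)/(l-1)*(j*X/l) = X/(l*(l-1)) * ((c+k)*j)" by (simp add: ac_simps)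
  ultimately show ?thesis by (simp add: distrib_left)
qed
lemma alg2: fixes l c X :: real assumes "l > 1"
  shows "X/(l*(l-1)) * (c*(l-1)) = c/l*X" using assms by simp

lemma core:
  fixes c k j :: int
  assumes c: "c \<ge> 1" and k: "k \<ge> 1"
  shows "real_of_int c / real_of_int (c + (k+1)*j) * real_of_int (ibinom (c + (k+1)*j) j) =
    real_of_int (c-1) / real_of_int (c + (k+1)*j - 1) * real_of_int (ibinom (c + (k+1)*j - 1) j)
    + real_of_int (c+k) / real_of_int (c + (k+1)*j - 1) * real_of_int (ibinom (c + (k+1)*j - 1) (j-1))
    + (if c = 1 \<and> j = 0 then 1 else 0)"
proof -
  define L where "L = c + (k+1)*j"
  consider "j < 0" | "j = 0" | "j \<ge> 1" by linarith
  then show ?thesis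
  proof cases
    case 1 then show ?thesis by (simp add: ibinom_def)
  next
    case 2
    then show ?thesis using c by (cases "c = 1") (auto simp: ibinom_def)
  next
    case 3
    have kj: "(k+1)*j \<ge> 2 * j" using 3 k by (intro mult_right_mono) auto
    have L2: "L \<ge> 2" using 3 c kj unfolding L_def by linarith
    have jL: "j \<le> L" using 3 c kj unfolding L_def by linarith
    obtain Ln where Ln: "L = int Ln" using L2 by (intro that[of "nat L"]) simp
    obtain jn where jn: "j = int (Suc jn)" using 3 by (intro that[of "nat j - 1"]) simp
    have nj: "nat j = Suc jn" "nat (j - 1) = jn" using jn by auto
    have nL: "nat L = Ln" "nat (L - 1) = Ln - 1" using Ln by auto
    have e1: "ibinom L j = int (Ln choose Suc jn)" using Ln jn nj nL unfolding ibinom_def by auto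
    have e2: "ibinom (L-1) j = int ((Ln - 1) choose Suc jn)" using Ln jn L2 nj nL unfolding ibinom_def
      by auto
    have e3: "ibinom (L-1) (j-1) = int ((Ln - 1) choose jn)" using Ln jn L2 nj nL unfolding ibinom_def
      by auto
    have a1: "(Ln - Suc jn) * (Ln choose Suc jn) = Ln * ((Ln - 1) choose Suc jn)" by (rule binomial_absorb_comp)
    have a2: "Suc jn * (Ln choose Suc jn) = Ln * ((Ln - 1) choose jn)" by (rule binomial_absorption)
    define X where "X = real (Ln choose Suc jn)"
    define Y where "Y = real ((Ln - 1) choose Suc jn)"
    define Z where "Z = real ((Ln - 1) choose jn)"
    have b1: "(real_of_int L - real_of_int j) * X = real_of_int L * Y"
      using arg_cong[OF a1, of real] jL Ln jn unfolding X_def Y_def by (simp add: of_nat_diff)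
    have b2: "real_of_int j * X = real_of_int L * Z"
      using arg_cong[OF a2, of real] Ln jn unfolding X_def Z_def by (simp add: algebra_simps)
    have Lp: "real_of_int L > 1" using L2 by simp
    have Ldef: "real_of_int L = real_of_int c + (real_of_int k + 1) * real_of_int j"
      unfolding L_def by simp
    have "real_of_int c / real_of_int L * X =
      real_of_int (c-1) / real_of_int (L - 1) * Y + real_of_int (c+k) / real_of_int (L - 1) * Z"
    proof -
      have Y': "Y = (real_of_int L - real_of_int j) * X / real_of_int L" using b1 Lp by (simp add: field_simps)
      have Z': "Z = real_of_int j * X / real_of_int L" using b2 Lp by (simp add: field_simps)
      have nz: "real_of_int L - 1 \<noteq> 0" using Lp by simp
      have key: "real_of_int c * (real_of_int L - 1) = (real_of_int c - 1) * (real_of_int L - real_of_int j) + (real_of_int c + real_of_int k) * real_of_int j"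
        unfolding Ldef by (simp add: algebra_simps)
      have "real_of_int (c-1) / real_of_int (L - 1) * Y + real_of_int (c+k) / real_of_int (L - 1) * Z
         = X / (real_of_int L * (real_of_int L - 1)) * ((real_of_int c - 1) * (real_of_int L - real_of_int j) + (real_of_int c + real_of_int k) * real_of_int j)"
        unfolding Y' Z' using Lp alg[of "real_of_int L" "real_of_int c" "real_of_int j" X "real_of_int k"] by simp
      also have "\<dots> = real_of_int c / real_of_int L * X" unfolding key[symmetric] using Lp by (rule alg2)
      finally show ?thesis by simp
    qed
    then show ?thesis using 3 unfolding L_def[symmetric] using e1 e2 e3 X_def Y_def Z_def by simp
  qed
qed


definition Tm :: "int \<Rightarrow> int \<Rightarrow> int \<Rightarrow> int \<Rightarrow> int \<Rightarrow> int \<Rightarrow> int \<Rightarrow> real" where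
  "Tm k r m n a b i = (-1) ^ nat i *
       (real_of_int (k * (b + r) - a) / real_of_int ((k + 1) * (n - i) - a - b + k * r)) *
       real_of_int (ibinom ((k + 1) * (n - i) - a - b + k * r) (n - b - i)) *
       real_of_int (ibinom (k * (n + r - i) - m - 1) i)"

lemma Tm_rec:
  assumes k: "k \<ge> 1" and g: "a < k * (b + r)"
  shows "Tm k r m n a b i = Tm k r m n (a+1) b i + Tm k r m n a (b+1) i +
     (if k*(b+r)-a = 1 \<and> i = n-b then (-1) ^ nat i * real_of_int (ibinom (k * (n + r - i) - m - 1) i) else 0)"
proof -
  define c where "c = k*(b+r)-a"
  define j where "j = n-b-i"
  define s where "s = (-1::real) ^ nat i"
  define B where "B = real_of_int (ibinom (k * (n + r - i) - m - 1) i)"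
  have c1: "c \<ge> 1" using g unfolding c_def by simp
  have L1: "(k+1)*(n-i)-a-b+k*r = c + (k+1)*j" by (simp add: c_def j_def algebra_simps)
  have L2: "(k+1)*(n-i)-(a+1)-b+k*r = c+(k+1)*j-1" by (simp add: c_def j_def algebra_simps)
  have L3: "(k+1)*(n-i)-a-(b+1)+k*r = c+(k+1)*j-1" by (simp add: c_def j_def algebra_simps)
  have C2: "k*(b+r)-(a+1) = c-1" by (simp add: c_def)
  have C3: "k*(b+1+r)-a = c+k" by (simp add: c_def algebra_simps)
  have J3: "n-(b+1)-i = j-1" by (simp add: j_def)
  have T1: "Tm k r m n a b i = s * (real_of_int c / real_of_int (c + (k+1)*j) * real_of_int (ibinom (c + (k+1)*j) j)) * B"
    unfolding Tm_def L1 s_def B_def c_def[symmetric] j_def[symmetric] by simp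
  have T2: "Tm k r m n (a+1) b i = s * (real_of_int (c-1) / real_of_int (c + (k+1)*j - 1) * real_of_int (ibinom (c + (k+1)*j - 1) j)) * B"
    unfolding Tm_def L2 s_def B_def C2 j_def[symmetric] by simp
  have T3: "Tm k r m n a (b+1) i = s * (real_of_int (c+k) / real_of_int (c + (k+1)*j - 1) * real_of_int (ibinom (c + (k+1)*j - 1) (j-1))) * B"
    unfolding Tm_def L3 s_def B_def J3 by (simp add: C3[unfolded add.assoc] add.assoc)
  have "(if c = 1 \<and> j = 0 then 1 else 0) * s * B = (if k*(b+r)-a = 1 \<and> i = n-b then (-1) ^ nat i * real_of_int (ibinom (k * (n + r - i) - m - 1) i) else 0)"
    unfolding c_def j_def s_def B_def by auto
  then show ?thesis unfolding T1 T2 T3 core[OF c1 k, of j]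
    by (simp add: algebra_simps)
qed


definition H :: "int \<Rightarrow> int \<Rightarrow> int \<Rightarrow> int \<Rightarrow> int \<Rightarrow> int \<Rightarrow> real" where
  "H k r m n a b = (\<Sum>i\<in>{0..n-b}. Tm k r m n a b i)"

lemma Tm_neg: "n - b - i < 0 \<Longrightarrow> Tm k r m n a b i = 0"
  unfolding Tm_def ibinom_def by simp

lemma Tm_c0: "k*(b+r) - a = 0 \<Longrightarrow> Tm k r m n a b i = 0"
  unfolding Tm_def by simp

lemma H_c0: "k*(b+r) - a = 0 \<Longrightarrow> H k r m n a b = 0"
  unfolding H_def using Tm_c0 by simp

lemma H_rec:
  assumes k: "k \<ge> 1" and g: "a < k * (b + r)"
  shows "H k r m n a b = H k r m n (a+1) b + H k r m n a (b+1) +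
    (if k*(b+r)-a = 1 \<and> b \<le> n then (-1) ^ nat (n-b) * real_of_int (ibinom (k*(b+r)-m-1) (n-b)) else 0)"
proof -
  have "H k r m n a b = (\<Sum>i\<in>{0..n-b}. Tm k r m n (a+1) b i + Tm k r m n a (b+1) i +
     (if k*(b+r)-a = 1 \<and> i = n-b then (-1) ^ nat i * real_of_int (ibinom (k * (n + r - i) - m - 1) i) else 0))"
    unfolding H_def using Tm_rec[OF k g] by simp
  also have "\<dots> = H k r m n (a+1) b + (\<Sum>i\<in>{0..n-b}. Tm k r m n a (b+1) i) +
     (\<Sum>i\<in>{0..n-b}. (if k*(b+r)-a = 1 \<and> i = n-b then (-1) ^ nat i * real_of_int (ibinom (k * (n + r - i) - m - 1) i) else 0))"
    unfolding H_def sum.distrib by simp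
  also have "(\<Sum>i\<in>{0..n-b}. Tm k r m n a (b+1) i) = H k r m n a (b+1)"
    unfolding H_def
    by (rule sum.mono_neutral_right) (auto intro: Tm_neg)
  also have "(\<Sum>i\<in>{0..n-b}. (if k*(b+r)-a = 1 \<and> i = n-b then (-1) ^ nat i * real_of_int (ibinom (k * (n + r - i) - m - 1) i) else 0))
      = (if k*(b+r)-a = 1 \<and> b \<le> n then (-1) ^ nat (n-b) * real_of_int (ibinom (k*(b+r)-m-1) (n-b)) else 0)"
  proof (cases "k*(b+r)-a = 1 \<and> b \<le> n")
    case True
    have e: "k * (n + r - (n - b)) - m - 1 = k*(b+r)-m-1" by (simp add: algebra_simps)
    show ?thesis using True by (simp add: sum.delta' e add.commute)
  next
    case False
    then show ?thesis by (auto intro!: sum.neutral)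
  qed
  finally show ?thesis .
qed


definition U :: "int \<Rightarrow> int \<Rightarrow> int \<Rightarrow> int \<Rightarrow> real" where
  "U m n a b = (-1) ^ nat (n-b) * real_of_int (ibinom (a-m-1) (n-b))"

lemma U_pascal:
  assumes "m+1 \<le> a" "b \<le> n"
  shows "U m n a b = U m n (a+1) b + U m n a (b+1)"
proof (cases "b = n")
  case True
  then show ?thesis using assms unfolding U_def ibinom_def by simp
next
  case False
  define N where "N = nat (a-m-1)"
  define j where "j = nat (n-b-1)"
  have e0: "nat (n-b) = Suc j" "nat (n-(b+1)) = j" using False assms unfolding j_def by auto
  have e1: "nat (a-m-1) = N" "nat (a+1-m-1) = Suc N" using assms unfolding N_def by auto
  have "U m n a b = (-1)^Suc j * real (N choose Suc j)"
    unfolding U_def ibinom_def using e0 e1 False assms by auto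
  moreover have "U m n (a+1) b = (-1)^Suc j * real (Suc N choose Suc j)"
    unfolding U_def ibinom_def using e0 e1 False assms by auto
  moreover have "U m n a (b+1) = (-1)^j * real (N choose j)"
    unfolding U_def ibinom_def using e0 e1 False assms by auto
  ultimately show ?thesis by (simp add: algebra_simps)
qed

lemma H_U:
  assumes k: "k \<ge> 1" and a1: "m+1 \<le> a" and g: "a < k*(b+r)"
  shows "H k r m n a b = U m n a b"
  using a1 g
proof (induction "nat(n+1-b)" arbitrary: a b rule: less_induct)
  case less
  show ?case
  proof (cases "b \<le> n")
    case False
    then show ?thesis unfolding H_def U_def ibinom_def by simp
  next
    case True
    have IHb: "H k r m n a' (b+1) = U m n a' (b+1)" if "m+1 \<le> a'" "a' < k*(b+r)" for a'
    proof (rule less.hyps)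
      show "nat (n + 1 - (b + 1)) < nat (n + 1 - b)" using True by simp
      show "m+1 \<le> a'" by fact
      have "k*(b+r) \<le> k*(b+1+r)" using k by simp
      then show "a' < k * (b + 1 + r)" using that by simp
    qed
    have inner: "H k r m n a' b = U m n a' b" if "nat(k*(b+r)-a') = e" "m+1 \<le> a'" "a' < k*(b+r)" for e a'
      using that
    proof (induction e arbitrary: a' rule: less_induct)
      case (less e)
      have rec: "H k r m n a' b = H k r m n (a'+1) b + H k r m n a' (b+1) +
        (if k*(b+r)-a' = 1 \<and> b \<le> n then (-1) ^ nat (n-b) * real_of_int (ibinom (k*(b+r)-m-1) (n-b)) else 0)"
        using H_rec[OF k less.prems(3)] .
      show ?case
      proof (cases "k*(b+r)-a' = 1")
        case True
        have "H k r m n (a'+1) b = 0" using H_c0 True by simp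
        moreover have "ibinom (k*(b+r)-m-1) (n-b) = ibinom (a'-m) (n-b)" using True by (simp add: algebra_simps)
        ultimately have "H k r m n a' b = U m n (a'+1) b + U m n a' (b+1)"
          using rec True \<open>b \<le> n\<close> IHb[OF less.prems(2,3)] unfolding U_def by simp
        then show ?thesis using U_pascal[OF less.prems(2) \<open>b \<le> n\<close>] by simp
      next
        case False
        have "H k r m n (a'+1) b = U m n (a'+1) b"
          using less.IH[of "nat(k*(b+r)-(a'+1))" "a'+1"] less.prems False by simp
        then have "H k r m n a' b = U m n (a'+1) b + U m n a' (b+1)"
          using rec False IHb[OF less.prems(2,3)] by simp
        then show ?thesis using U_pascal[OF less.prems(2) \<open>b \<le> n\<close>] by simp
      qed
    qed
    show ?thesis using inner less.prems by blast
  qed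
qed


lemma H_empty: "n < b \<Longrightarrow> H k r m n a b = 0"
  unfolding H_def by simp

lemma G_H:
  assumes k: "k \<ge> 1" and am: "a \<le> m" and g: "a < k*(b+r)"
  shows "real (card (AP k r a b m n)) = H k r m n a b"
  using am g
proof (induction "nat(m-a+n-b)" arbitrary: a b rule: less_induct)
  case less
  show ?case
  proof (cases "b \<le> n")
    case False
    then show ?thesis using AP_empty[of m a n b k r] H_empty by simp
  next
    case bn: True
    show ?thesis
    proof (cases "(a,b) = (m,n)")
      case True
      then have ab: "a = m" "b = n" by auto
      define c where "c = k*(n+r)-m"
      have c1: "c \<ge> 1" using less.prems ab unfolding c_def by simp
      have e1: "(k + 1) * (n - 0) - m - n + k * r = c" unfolding c_def by (simp add: algebra_simps)
      have e2: "k * (n + r - 0) - m - 1 = c - 1" unfolding c_def by (simp add: algebra_simps)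
      have "H k r m n m n = Tm k r m n m n 0" unfolding H_def by simp
      also have "\<dots> = 1" unfolding Tm_def e1 e2 c_def[symmetric] using c1 by (simp add: ibinom_def)
      finally show ?thesis using AP_base[OF less.prems(2)] ab by simp
    next
      case ne: False
      have cs: "card (AP k r a b m n) = card (AP k r (a+1) b m n) + card (AP k r a (b+1) m n)"
        using AP_card_step[OF less.prems(2) ne] .
      have rec: "H k r m n a b = H k r m n (a+1) b + H k r m n a (b+1) +
        (if k*(b+r)-a = 1 \<and> b \<le> n then (-1) ^ nat (n-b) * real_of_int (ibinom (k*(b+r)-m-1) (n-b)) else 0)"
        using H_rec[OF k less.prems(2)] .
      have A2: "real (card (AP k r a (b+1) m n)) = H k r m n a (b+1)"
      proof (cases "b = n")
        case True
        then show ?thesis using AP_empty[of m a n "b+1" k r] H_empty[of n "b+1"] by simp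
      next
        case False
        have "k*(b+r) \<le> k*(b+1+r)" using k by simp
        then show ?thesis using less.hyps[of a "b+1"] less.prems False bn by simp
      qed
      have A1: "real (card (AP k r (a+1) b m n)) = H k r m n (a+1) b +
        (if k*(b+r)-a = 1 \<and> b \<le> n then (-1) ^ nat (n-b) * real_of_int (ibinom (k*(b+r)-m-1) (n-b)) else 0)"
      proof (cases "k*(b+r)-a = 1")
        case True
        have "ibinom (k*(b+r)-m-1) (n-b) = ibinom (a-m) (n-b)" using True by (simp add: algebra_simps)
        also have "\<dots> = 0" using less.prems(1) ne bn unfolding ibinom_def by auto
        finally show ?thesis using True AP_empty[of m "a+1" n b k r] H_c0[of k b r "a+1"] by simp
      next
        case False
        show ?thesis
        proof (cases "a+1 \<le> m")
          case True
          then show ?thesis using less.hyps[of "a+1" b] less.prems False bn by simp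
        next
          case am: False
          then have "a = m" "b < n" using less.prems ne bn by auto
          then have "H k r m n (a+1) b = U m n (a+1) b"
            using H_U[OF k, of m "a+1" b r n] less.prems False by simp
          also have "\<dots> = 0" unfolding U_def ibinom_def using \<open>a = m\<close> \<open>b < n\<close> by simp
          finally show ?thesis using False am AP_empty[of m "a+1" n b k r] by simp
        qed
      qed
      show ?thesis using cs rec A1 A2 by simp
    qed
  qed
qed


lemma Tm_big:
  assumes "0 \<le> i" "(k+1)*i > k*(n+r)-m-1"
  shows "Tm k r m n a b i = 0"
proof -
  have lt: "k*(n+r-i)-m-1 < i" using assms by (simp add: algebra_simps)
  have "ibinom (k*(n+r-i)-m-1) i = 0"
  proof (cases "k*(n+r-i)-m-1 < 0")
    case True then show ?thesis unfolding ibinom_def by simp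
  next
    case False
    then have "nat (k*(n+r-i)-m-1) < nat i" using lt by simp
    then show ?thesis unfolding ibinom_def by (simp add: binomial_eq_0)
  qed
  then show ?thesis unfolding Tm_def by simp
qed

theorem corollary2p3:
  fixes k r a b m n :: int
  assumes "k \<ge> 1" and "0 \<le> a" and "a \<le> m"
    and "max 0 (real_of_int a / real_of_int k - real_of_int r) < real_of_int b"
    and "b \<le> n"
    and "real_of_int n > real_of_int m / real_of_int k - real_of_int r"
  shows "real (card (above_paths k r a b m n)) =
    (\<Sum>i \<in> {0..\<lfloor>real_of_int (k * (n + r) - m - 1) / real_of_int (k + 1)\<rfloor>}.
       (-1) ^ nat i *
       (real_of_int (k * (b + r) - a) / real_of_int ((k + 1) * (n - i) - a - b + k * r)) *
       real_of_int (ibinom ((k + 1) * (n - i) - a - b + k * r) (n - b - i)) *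
       real_of_int (ibinom (k * (n + r - i) - m - 1) i))"
proof -
  define Fl where "Fl = \<lfloor>real_of_int (k * (n + r) - m - 1) / real_of_int (k + 1)\<rfloor>"
  define M where "M = max Fl (n-b)"
  have g: "a < k*(b+r)" using assms(4) good_iff[OF assms(1), of a r b] by simp
  have "real (card (above_paths k r a b m n)) = H k r m n a b"
    using G_H[OF assms(1) assms(3) g] AP_eq[OF assms(1)] by simp
  also have "\<dots> = (\<Sum>i\<in>{0..M}. Tm k r m n a b i)"
    unfolding H_def M_def
    by (rule sum.mono_neutral_left) (auto intro: Tm_neg)
  also have "\<dots> = (\<Sum>i\<in>{0..Fl}. Tm k r m n a b i)"
  proof (rule sum.mono_neutral_right)
    show "finite {0..M}" by simp
    show "{0..Fl} \<subseteq> {0..M}" unfolding M_def by auto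
    show "\<forall>i\<in>{0..M} - {0..Fl}. Tm k r m n a b i = 0"
    proof
      fix i assume i: "i \<in> {0..M} - {0..Fl}"
      then have i0: "0 \<le> i" and iF: "Fl < i" by auto
      have kp: "real_of_int (k+1) > 0" using assms(1) by simp
      have "real_of_int (k * (n + r) - m - 1) / real_of_int (k + 1) < real_of_int i"
        using iF unfolding Fl_def by (simp add: floor_less_iff)
      then have "real_of_int (k * (n + r) - m - 1) < real_of_int ((k+1)*i)"
        using kp by (simp add: divide_less_eq mult.commute)
      then have "k * (n + r) - m - 1 < (k+1)*i" by linarith
      then show "Tm k r m n a b i = 0" using Tm_big i0 by blast
    qed
  qed
  finally show ?thesis unfolding Fl_def Tm_def .
qed

end
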